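(* Let $D\subseteq\mathbb{Z}$, let $\ell\ge0$, $c>0$, and let $f:D\to\mathbb{Z}$ satisfy $f(j)-f(i)\ge c(j-i)$ for all $i,j\in D$ with $j\ge i+\ell$. Let $T$ be a $D$-valued random variable with $\mathbb{E}|f(T)|^r<+\infty$, where $r\ge1$. Then \[ \mathbb{M}_r(f(T))\ge\left(\frac{c}{2}\right)^r\left(\mathbb{M}_r(T)-\ell^r\right), \] where $\mathbb{M}_r(U):=\mathbb{E}|U-\mathbb{E}U|^r$. *)

theory Defs
  imports "HOL-Probability.Probability"
begin

definition central_moment :: "'a measure \<Rightarrow> real \<Rightarrow> ('a \<Rightarrow> real) \<Rightarrow> real" where
  "central_moment M r U = integral\<^sup>L M (\<lambda>x. \<bar>U x - integral\<^sup>L M U\<bar> powr r)"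

end

theory Submission
  imports Defs
begin

lemma tpow: "(r::real) \<ge> 1 \<Longrightarrow> 0 \<le> t \<Longrightarrow> t \<le> 1 \<Longrightarrow> t powr r \<le> t"
  by (metis powr_one powr_mono')

lemma powr_conv0:
  fixes a b t r :: real
  assumes "r \<ge> 1" "a \<ge> 0" "b \<ge> 0" "0 < t" "t < 1"
  shows "((1-t)*a + t*b) powr r \<le> (1-t)*a powr r + t* b powr r"
proof (cases "a = 0 \<or> b = 0")
  case False
  then have "a > 0" "b > 0" using assms by auto
  then show ?thesis using convex_onD[OF powr_convex[OF assms(1)], of t a b] assms by auto
next
  case True
  then show ?thesis
  proof
    assume "a = 0"
    then have "((1-t)*a + t*b) powr r = t powr r * b powr r" using assms by (simp add: powr_mult)
    also have "\<dots> \<le> t * b powr r" using tpow[of r t] assms by (intro mult_right_mono) auto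
    finally show ?thesis using \<open>a = 0\<close> assms by simp
  next
    assume "b = 0"
    then have "((1-t)*a + t*b) powr r = (1-t) powr r * a powr r" using assms by (simp add: powr_mult)
    also have "\<dots> \<le> (1-t) * a powr r" using tpow[of r "1-t"] assms by (intro mult_right_mono) auto
    finally show ?thesis using \<open>b = 0\<close> assms by simp
  qed
qed

lemma abs_powr_convex:
  fixes s r :: real assumes "r \<ge> 1"
  shows "convex_on UNIV (\<lambda>z. \<bar>s - z\<bar> powr r)"
proof (rule convex_onI)
  fix t x y :: real assume t: "0 < t" "t < 1"
  have "\<bar>s - ((1 - t) *\<^sub>R x + t *\<^sub>R y)\<bar> = \<bar>(1-t)*(s-x) + t*(s-y)\<bar>"
    by (simp add: algebra_simps)
  also have "\<dots> \<le> (1-t)*\<bar>s-x\<bar> + t*\<bar>s-y\<bar>"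
  proof -
    have "\<bar>(1-t)*(s-x)\<bar> = (1-t)*\<bar>s-x\<bar>" "\<bar>t*(s-y)\<bar> = t*\<bar>s-y\<bar>" using t by (auto simp: abs_mult)
    then show ?thesis using abs_triangle_ineq[of "(1-t)*(s-x)" "t*(s-y)"] by linarith
  qed
  finally have "\<bar>s - ((1 - t) *\<^sub>R x + t *\<^sub>R y)\<bar> powr r \<le> ((1-t)*\<bar>s-x\<bar> + t*\<bar>s-y\<bar>) powr r"
    using assms by (intro powr_mono2) auto
  also have "\<dots> \<le> (1-t)*\<bar>s-x\<bar> powr r + t*\<bar>s-y\<bar> powr r"
    using powr_conv0[OF assms _ _ t] by auto
  finally show "\<bar>s - ((1 - t) *\<^sub>R x + t *\<^sub>R y)\<bar> powr r \<le> (1-t)*\<bar>s-x\<bar> powr r + t*\<bar>s-y\<bar> powr r" .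
qed auto

lemma sum_bound:
  fixes a b r :: real assumes "r \<ge> 1"
  shows "\<bar>a + b\<bar> powr r \<le> 2 powr (r-1) * (\<bar>a\<bar> powr r + \<bar>b\<bar> powr r)"
proof -
  have "\<bar>a + b\<bar> \<le> 2 * ((1-1/2)*\<bar>a\<bar> + (1/2)*\<bar>b\<bar>)" by simp
  then have "\<bar>a + b\<bar> powr r \<le> (2 * ((1-1/2)*\<bar>a\<bar> + (1/2)*\<bar>b\<bar>)) powr r"
    using assms by (intro powr_mono2) auto
  also have "\<dots> = 2 powr r * ((1-1/2)*\<bar>a\<bar> + (1/2)*\<bar>b\<bar>) powr r"
    by (rule powr_mult)
  also have "\<dots> \<le> 2 powr r * ((1-1/2)*\<bar>a\<bar> powr r + (1/2)*\<bar>b\<bar> powr r)"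
    using powr_conv0[OF assms, of "\<bar>a\<bar>" "\<bar>b\<bar>" "1/2"] by (intro mult_left_mono) auto
  also have "\<dots> = 2 powr (r-1) * (\<bar>a\<bar> powr r + \<bar>b\<bar> powr r)"
    by (simp add: powr_diff field_simps)
  finally show ?thesis .
qed

theorem lemma2p2:
  fixes M :: "'a measure" and D :: "int set" and f :: "int \<Rightarrow> int"
    and T :: "'a \<Rightarrow> int" and l c r :: real
  assumes "prob_space M"
    and "l \<ge> 0" and "c > 0" and "r \<ge> 1"
    and "\<And>i j. i \<in> D \<Longrightarrow> j \<in> D \<Longrightarrow> real_of_int j \<ge> real_of_int i + l
           \<Longrightarrow> real_of_int (f j - f i) \<ge> c * real_of_int (j - i)"
    and "T \<in> M \<rightarrow>\<^sub>M count_space UNIV"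
    and "\<And>x. x \<in> space M \<Longrightarrow> T x \<in> D"
    and "integrable M (\<lambda>x. \<bar>real_of_int (f (T x))\<bar> powr r)"
  shows "central_moment M r (\<lambda>x. real_of_int (f (T x)))
           \<ge> (c / 2) powr r * (central_moment M r (\<lambda>x. real_of_int (T x)) - l powr r)"
proof -
  interpret prob_space M by fact
  note r = assms(4) and cpos = assms(3) and lpos = assms(2) and fD = assms(5) and TD = assms(7)
  define u where "u = (\<lambda>x. real_of_int (f (T x)))"
  define t where "t = (\<lambda>x. real_of_int (T x))"
  have meas: "(\<lambda>x. g (T x)) \<in> borel_measurable M" for g :: "int \<Rightarrow> real"
    by (rule measurable_compose[OF assms(6)]) simp
  have um: "u \<in> borel_measurable M" unfolding u_def by (rule meas)
  have tm: "t \<in> borel_measurable M" unfolding t_def by (rule meas)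
  have int_aux: "integrable M X \<and> (\<forall>a. integrable M (\<lambda>x. \<bar>X x - a\<bar> powr r))"
    if Xm: "X \<in> borel_measurable M" and Xi: "integrable M (\<lambda>x. \<bar>X x\<bar> powr r)" for X
  proof (intro conjI allI)
    have bnd: "\<bar>X x\<bar> \<le> 1 + \<bar>X x\<bar> powr r" for x
    proof (cases "\<bar>X x\<bar> \<le> 1")
      case False
      then have "\<bar>X x\<bar> powr 1 \<le> \<bar>X x\<bar> powr r" using r by (intro powr_mono) auto
      then show ?thesis using powr_ge_zero[of "\<bar>X x\<bar>" r] by simp
    next
      case True
      then show ?thesis using powr_ge_zero[of "\<bar>X x\<bar>" r] by linarith
    qed
    show "integrable M X"
    proof (rule Bochner_Integration.integrable_bound[OF _ Xm])
      show "integrable M (\<lambda>x. 1 + \<bar>X x\<bar> powr r)"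
        by (intro Bochner_Integration.integrable_add integrable_const Xi)
      show "AE x in M. norm (X x) \<le> norm (1 + \<bar>X x\<bar> powr r)"
      proof (rule AE_I2)
        fix x
        have "0 \<le> 1 + \<bar>X x\<bar> powr r" using powr_ge_zero[of "\<bar>X x\<bar>" r] by linarith
        then show "norm (X x) \<le> norm (1 + \<bar>X x\<bar> powr r)" using bnd[of x] by simp
      qed
    qed
    fix a
    show "integrable M (\<lambda>x. \<bar>X x - a\<bar> powr r)"
    proof (rule Bochner_Integration.integrable_bound)
      show "integrable M (\<lambda>x. 2 powr (r-1) * (\<bar>X x\<bar> powr r + \<bar>-a\<bar> powr r))"
        by (intro integrable_mult_right Bochner_Integration.integrable_add integrable_const Xi)
      show "(\<lambda>x. \<bar>X x - a\<bar> powr r) \<in> borel_measurable M" using Xm by measurable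
      show "AE x in M. norm (\<bar>X x - a\<bar> powr r) \<le> norm (2 powr (r-1) * (\<bar>X x\<bar> powr r + \<bar>-a\<bar> powr r))"
      proof (rule AE_I2)
        fix x
        have "\<bar>X x - a\<bar> powr r \<le> 2 powr (r-1) * (\<bar>X x\<bar> powr r + \<bar>-a\<bar> powr r)"
          using sum_bound[OF r, of "X x" "-a"] by simp
        moreover have "0 \<le> 2 powr (r-1) * (\<bar>X x\<bar> powr r + \<bar>-a\<bar> powr r)" by simp
        ultimately show "norm (\<bar>X x - a\<bar> powr r) \<le> norm (2 powr (r-1) * (\<bar>X x\<bar> powr r + \<bar>-a\<bar> powr r))"
          by simp
      qed
    qed
  qed
  have uiP: "integrable M (\<lambda>x. \<bar>u x\<bar> powr r)" using assms(8) unfolding u_def .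
  note uI = int_aux[OF um uiP]
  obtain x0 where x0: "x0 \<in> space M" using not_empty by blast
  define i0 where "i0 = T x0"
  have i0D: "i0 \<in> D" using TD[OF x0] unfolding i0_def .
  have dist: "\<bar>real_of_int j - i0\<bar> \<le> l + \<bar>real_of_int (f j) - f i0\<bar> / c" if jD: "j \<in> D" for j
  proof -
    consider "real_of_int j \<ge> i0 + l" | "real_of_int i0 \<ge> j + l" | "\<bar>real_of_int j - i0\<bar> < l" by linarith
    then show ?thesis
    proof cases
      case 1
      from fD[OF i0D jD 1] have "c * (real_of_int j - i0) \<le> real_of_int (f j) - f i0" by simp
      then have "real_of_int j - i0 \<le> (real_of_int (f j) - f i0) / c" using cpos by (simp add: field_simps)
      moreover have "(real_of_int (f j) - f i0) / c \<le> \<bar>real_of_int (f j) - f i0\<bar> / c"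
        using cpos by (intro divide_right_mono) auto
      ultimately show ?thesis using 1 lpos by linarith
    next
      case 2
      from fD[OF jD i0D 2] have "c * (real_of_int i0 - j) \<le> real_of_int (f i0) - f j" by simp
      then have "real_of_int i0 - j \<le> (real_of_int (f i0) - f j) / c" using cpos by (simp add: field_simps)
      moreover have "(real_of_int (f i0) - f j) / c \<le> \<bar>real_of_int (f j) - f i0\<bar> / c"
        using cpos by (intro divide_right_mono) auto
      ultimately show ?thesis using 2 lpos by linarith
    next
      case 3
      moreover have "0 \<le> \<bar>real_of_int (f j) - f i0\<bar> / c" using cpos by simp
      ultimately show ?thesis by linarith
    qed
  qed
  define K where "K = \<bar>real_of_int i0\<bar> + l + \<bar>real_of_int (f i0)\<bar> / c"
  have tb: "\<bar>t x\<bar> \<le> K + \<bar>u x\<bar> / c" if x: "x \<in> space M" for x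
  proof -
    have "\<bar>t x\<bar> \<le> \<bar>real_of_int i0\<bar> + \<bar>t x - i0\<bar>" by linarith
    moreover have "\<bar>t x - i0\<bar> \<le> l + \<bar>u x - f i0\<bar> / c"
      using dist[OF TD[OF x]] unfolding t_def u_def by simp
    moreover have "\<bar>u x - f i0\<bar> / c \<le> (\<bar>u x\<bar> + \<bar>real_of_int (f i0)\<bar>) / c"
      using cpos by (intro divide_right_mono) auto
    ultimately show ?thesis unfolding K_def by (simp add: add_divide_distrib)
  qed
  have tiP: "integrable M (\<lambda>x. \<bar>t x\<bar> powr r)"
  proof (rule Bochner_Integration.integrable_bound[of _ "\<lambda>x. 2 powr (r-1) * (\<bar>K\<bar> powr r + \<bar>u x\<bar> powr r / c powr r)"])
    show "integrable M (\<lambda>x. 2 powr (r-1) * (\<bar>K\<bar> powr r + \<bar>u x\<bar> powr r / c powr r))"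
      using uiP by auto
    show "(\<lambda>x. \<bar>t x\<bar> powr r) \<in> borel_measurable M" using tm by measurable
    show "AE x in M. norm (\<bar>t x\<bar> powr r) \<le> norm (2 powr (r-1) * (\<bar>K\<bar> powr r + \<bar>u x\<bar> powr r / c powr r))"
    proof (rule AE_I2)
      fix x assume x: "x \<in> space M"
      have "\<bar>t x\<bar> powr r \<le> \<bar>K + \<bar>u x\<bar> / c\<bar> powr r"
        using tb[OF x] r by (intro powr_mono2) auto
      also have "\<dots> \<le> 2 powr (r-1) * (\<bar>K\<bar> powr r + \<bar>\<bar>u x\<bar> / c\<bar> powr r)"
        by (rule sum_bound[OF r])
      also have "\<bar>\<bar>u x\<bar> / c\<bar> powr r = \<bar>u x\<bar> powr r / c powr r"
        using cpos by (simp add: powr_divide)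
      finally show "norm (\<bar>t x\<bar> powr r) \<le> norm (2 powr (r-1) * (\<bar>K\<bar> powr r + \<bar>u x\<bar> powr r / c powr r))"
        by simp
    qed
  qed
  note tI = int_aux[OF tm tiP]
  define mu where "mu = expectation u"
  define mt where "mt = expectation t"
  define Mu where "Mu = expectation (\<lambda>x. \<bar>u x - mu\<bar> powr r)"
  define Mt where "Mt = expectation (\<lambda>x. \<bar>t x - mt\<bar> powr r)"
  define HU where "HU s = expectation (\<lambda>y. \<bar>s - u y\<bar> powr r)" for s
  define HT where "HT s = expectation (\<lambda>y. \<bar>s - t y\<bar> powr r)" for s
  have uI2: "integrable M (\<lambda>y. \<bar>s - u y\<bar> powr r)" for s
    using uI by (subst abs_minus_commute) auto
  have tI2: "integrable M (\<lambda>y. \<bar>s - t y\<bar> powr r)" for s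
    using tI by (subst abs_minus_commute) auto
  have jensen: "\<bar>s - mt\<bar> powr r \<le> HT s" for s
    unfolding HT_def mt_def
    by (rule jensens_inequality[of t UNIV, where q="\<lambda>z. \<bar>s - z\<bar> powr r"])
       (use tI tI2 abs_powr_convex[OF r] in auto)
  have upU: "HU s \<le> 2 powr (r-1) * (\<bar>s - mu\<bar> powr r + Mu)" for s
  proof -
    have "HU s \<le> expectation (\<lambda>y. 2 powr (r-1) * (\<bar>s - mu\<bar> powr r + \<bar>u y - mu\<bar> powr r))"
      unfolding HU_def
    proof (rule integral_mono)
      show "integrable M (\<lambda>y. 2 powr (r-1) * (\<bar>s - mu\<bar> powr r + \<bar>u y - mu\<bar> powr r))"
        using uI by auto
      fix y
      show "\<bar>s - u y\<bar> powr r \<le> 2 powr (r-1) * (\<bar>s - mu\<bar> powr r + \<bar>u y - mu\<bar> powr r)"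
        using sum_bound[OF r, of "s - mu" "mu - u y"] by (simp add: abs_minus_commute)
    qed (rule uI2)
    also have "\<dots> = 2 powr (r-1) * (\<bar>s - mu\<bar> powr r + Mu)"
      unfolding Mu_def using uI by (simp add: prob_space)
    finally show ?thesis .
  qed
  have upT: "HT s \<le> 2 powr (r-1) * (\<bar>s - mt\<bar> powr r + Mt)" for s
  proof -
    have "HT s \<le> expectation (\<lambda>y. 2 powr (r-1) * (\<bar>s - mt\<bar> powr r + \<bar>t y - mt\<bar> powr r))"
      unfolding HT_def
    proof (rule integral_mono)
      show "integrable M (\<lambda>y. 2 powr (r-1) * (\<bar>s - mt\<bar> powr r + \<bar>t y - mt\<bar> powr r))"
        using tI by auto
      fix y
      show "\<bar>s - t y\<bar> powr r \<le> 2 powr (r-1) * (\<bar>s - mt\<bar> powr r + \<bar>t y - mt\<bar> powr r)"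
        using sum_bound[OF r, of "s - mt" "mt - t y"] by (simp add: abs_minus_commute)
    qed (rule tI2)
    also have "\<dots> = 2 powr (r-1) * (\<bar>s - mt\<bar> powr r + Mt)"
      unfolding Mt_def using tI by (simp add: prob_space)
    finally show ?thesis .
  qed
  have pw: "\<bar>u x - u y\<bar> powr r \<ge> c powr r * (\<bar>t x - t y\<bar> powr r - l powr r)"
    if x: "x \<in> space M" and y: "y \<in> space M" for x y
  proof -
    have gen: "\<bar>real_of_int (f i) - f j\<bar> powr r \<ge> c powr r * (\<bar>real_of_int i - j\<bar> powr r - l powr r)"
      if iD: "i \<in> D" and jD: "j \<in> D" and ij: "real_of_int j \<le> i" for i j
    proof (cases "real_of_int i \<ge> j + l")
      case True
      from fD[OF jD iD True] have "c * (real_of_int i - j) \<le> real_of_int (f i) - f j" by simp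
      then have "(c * \<bar>real_of_int i - j\<bar>) powr r \<le> \<bar>real_of_int (f i) - f j\<bar> powr r"
        using ij cpos r by (intro powr_mono2) auto
      then have "c powr r * \<bar>real_of_int i - j\<bar> powr r \<le> \<bar>real_of_int (f i) - f j\<bar> powr r"
        using cpos by (simp add: powr_mult)
      moreover have "c powr r * (\<bar>real_of_int i - j\<bar> powr r - l powr r) \<le> c powr r * \<bar>real_of_int i - j\<bar> powr r"
        by (simp add: algebra_simps)
      ultimately show ?thesis by linarith
    next
      case False
      then have "\<bar>real_of_int i - j\<bar> powr r \<le> l powr r"
        using ij r by (intro powr_mono2) auto
      then have "c powr r * (\<bar>real_of_int i - j\<bar> powr r - l powr r) \<le> 0"
        by (simp add: mult_nonneg_nonpos)
      then show ?thesis using powr_ge_zero[of "\<bar>real_of_int (f i) - f j\<bar>" r] by linarith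
    qed
    show ?thesis
    proof (cases "T y \<le> T x")
      case True
      then show ?thesis using gen[OF TD[OF x] TD[OF y]] unfolding u_def t_def by simp
    next
      case False
      then show ?thesis using gen[OF TD[OF y] TD[OF x]] unfolding u_def t_def
        by (simp add: abs_minus_commute)
    qed
  qed
  define GU where "GU x = HU (u x)" for x
  define GT where "GT x = HT (t x)" for x
  have GUm: "GU \<in> borel_measurable M"
    unfolding GU_def u_def by (rule meas)
  have GTm: "GT \<in> borel_measurable M"
    unfolding GT_def t_def by (rule meas)
  have HUnn: "HU s \<ge> 0" for s unfolding HU_def by (intro Bochner_Integration.integral_nonneg) simp
  have HTnn: "HT s \<ge> 0" for s unfolding HT_def by (intro Bochner_Integration.integral_nonneg) simp
  have GUi: "integrable M GU"
  proof (rule Bochner_Integration.integrable_bound[OF _ GUm])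
    show "integrable M (\<lambda>x. 2 powr (r-1) * (\<bar>u x - mu\<bar> powr r + Mu))"
      using uI by auto
    show "AE x in M. norm (GU x) \<le> norm (2 powr (r-1) * (\<bar>u x - mu\<bar> powr r + Mu))"
    proof (rule AE_I2)
      fix x
      have "HU (u x) \<le> 2 powr (r-1) * (\<bar>u x - mu\<bar> powr r + Mu)" by (rule upU)
      moreover have "0 \<le> HU (u x)" by (rule HUnn)
      ultimately show "norm (GU x) \<le> norm (2 powr (r-1) * (\<bar>u x - mu\<bar> powr r + Mu))"
        unfolding GU_def by simp
    qed
  qed
  have GTi: "integrable M GT"
  proof (rule Bochner_Integration.integrable_bound[OF _ GTm])
    show "integrable M (\<lambda>x. 2 powr (r-1) * (\<bar>t x - mt\<bar> powr r + Mt))"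
      using tI by auto
    show "AE x in M. norm (GT x) \<le> norm (2 powr (r-1) * (\<bar>t x - mt\<bar> powr r + Mt))"
    proof (rule AE_I2)
      fix x
      have "HT (t x) \<le> 2 powr (r-1) * (\<bar>t x - mt\<bar> powr r + Mt)" by (rule upT)
      moreover have "0 \<le> HT (t x)" by (rule HTnn)
      ultimately show "norm (GT x) \<le> norm (2 powr (r-1) * (\<bar>t x - mt\<bar> powr r + Mt))"
        unfolding GT_def by simp
    qed
  qed
  have low: "GU x \<ge> c powr r * (GT x - l powr r)" if x: "x \<in> space M" for x
  proof -
    have "expectation (\<lambda>y. c powr r * (\<bar>t x - t y\<bar> powr r - l powr r)) \<le> GU x"
      unfolding GU_def HU_def
      by (rule integral_mono) (use tI2 uI2 pw[OF x] in auto)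
    moreover have "expectation (\<lambda>y. c powr r * (\<bar>t x - t y\<bar> powr r - l powr r)) = c powr r * (GT x - l powr r)"
      unfolding GT_def HT_def using tI2 by (simp add: prob_space)
    ultimately show ?thesis by linarith
  qed
  have A: "Mt \<le> expectation GT"
    unfolding Mt_def
    by (rule integral_mono) (use tI GTi jensen in \<open>auto simp: GT_def\<close>)
  have B: "c powr r * (expectation GT - l powr r) \<le> expectation GU"
  proof -
    have "expectation (\<lambda>x. c powr r * (GT x - l powr r)) \<le> expectation GU"
      by (rule integral_mono) (use GTi GUi low in auto)
    then show ?thesis using GTi by (simp add: prob_space)
  qed
  have C: "expectation GU \<le> 2 powr r * Mu"
  proof -
    have "expectation GU \<le> expectation (\<lambda>x. 2 powr (r-1) * (\<bar>u x - mu\<bar> powr r + Mu))"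
      by (rule integral_mono) (use GUi uI upU in \<open>auto simp: GU_def\<close>)
    also have "\<dots> = 2 powr (r-1) * (Mu + Mu)"
      using uI unfolding Mu_def by (simp add: prob_space)
    also have "\<dots> = 2 powr r * Mu" by (simp add: powr_diff)
    finally show ?thesis .
  qed
  have "c powr r * (Mt - l powr r) \<le> 2 powr r * Mu"
  proof -
    have "c powr r * (Mt - l powr r) \<le> c powr r * (expectation GT - l powr r)"
      using A by (intro mult_left_mono) auto
    then show ?thesis using B C by linarith
  qed
  then have "(c / 2) powr r * (Mt - l powr r) \<le> Mu"
    using cpos by (simp add: powr_divide field_simps)
  then show ?thesis unfolding central_moment_def Mt_def Mu_def mt_def mu_def u_def t_def by simp
qed

end
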